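(* Let $\mathsf P\subset\mathbb R^m$ be a $(\mu,\epsilon)$-net, $0<\rho_0\le\mu/4$, and $\mathsf P'$ a $\rho_0\epsilon$-perturbation of $\mathsf P$; set $\epsilon'=(1+\rho_0)\epsilon$ and $\mu'=(\mu-2\rho_0)/(1+\rho_0)$. Let $0<\Gamma_0\le1$ and $\delta_0\ge0$ satisfy $$\delta_0\le\Gamma_0^{m+1}\quad\text{and}\quad\Gamma_0\le\frac{2\mu^2}{75}.$$ If $\tau\subseteq\mathsf P'$ is a forbidden configuration (with parameters $\mu',\epsilon',\delta_0,\Gamma_0$), then $\tau$ has the $\alpha_0$-hoop property with $\alpha_0=2(16/\mu)^3\Gamma_0$, and $R(\tau_p)<2\epsilon$ for every $p\in\tau$.
   Context: Let $d(x,X)$ denote Euclidean distance from a point to a set; $B(c,r)$ is the open ball. For a finite $\mathsf P\subset\mathbb R^m$ and $\epsilon>0$, $\mathsf P$ is $\epsilon$-dense if $d(x,\mathsf P\cup\partial\,\mathrm{conv}(\mathsf P))<\epsilon$ for every $x\in\mathrm{conv}(\mathsf P)$; it is $\mu\epsilon$-separated if $\|p-q\|\ge\mu\epsilon$ for all distinct $p,q\in\mathsf P$. For $0<\mu\le1$, $\mathsf P$ is a $(\mu,\epsilon)$-net if it is $\epsilon$-dense and $\mu\epsilon$-separated. A $\rho_0\epsilon$-perturbation of $\mathsf P$ is a bijection $\zeta:\mathsf P\to\mathsf P'\subset\mathbb R^m$ with $\|\zeta(p)-p\|\le\rho_0\epsilon$ for all $p$. A simplex is a nonempty finite subset $\sigma\subset\mathbb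 R^m$ (vertices need not be affinely independent); $\dim\sigma=|\sigma|-1$; faces are nonempty subsets. For $p\in\sigma$, $\sigma_p=\sigma\setminus\{p\}$. $L(\sigma)$ is the largest distance between vertices. Altitude $D(p,\sigma)=d(p,\mathrm{aff}(\sigma_p))$. Thickness of a $j$-simplex: $\Upsilon(\sigma)=1$ if $j=0$, else $\min_{p}D(p,\sigma)/(jL(\sigma))$. $\sigma$ is $\Gamma_0$-good if every $j$-face $\sigma^j$ satisfies $\Upsilon(\sigma^j)\ge\Gamma_0^j$; $\Gamma_0$-bad otherwise; a $\Gamma_0$-flake is a $\Gamma_0$-bad simplex whose proper faces are all $\Gamma_0$-good. A circumscribing ball of $\sigma$ is an open ball whose boundary contains all vertices of $\sigma$. If one exists, the circumcentre $c(\sigma)$ and circumradius $R(\sigma)$ are the centre and radius of the smallest one (write $R(\sigma)<\infty$); otherwise $R(\sigma)=\infty$. The circumsphere is $S(\sigma)=\partial B(c(\sigma),R(\sigma))\cap\mathrm{aff}(\sigma)$. Forbidden configuration: given finite $\mathsf P'\subset\mathbb R^m$ and parameters $\mu',\epsilon'>0$, $0<\Gamma_0\le1$, $\delta_0\ge0$, a $(k+1)$-simplex $\tau\subseteq\mathsf P'$ with $k\le m$ is a forbidden configuration if it is a $\Gamma_0$-flake and there exist $p\in\tau$ and a circumscribing ball $B(C,R)$ of $\tau_p$ with $R<\epsilon'$ and $\big|\,\|p-C\|-R\,\big|\le\delta_0\mu'\epsilon'$. A simplex $\tau$ has the $\alpha_0$-hoop property ($\alpha_0>0$) if for every $p\in\tau$,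 $R(\tau_p)<\infty$ and $d(p,S(\tau_p))\le\alpha_0R(\tau_p)$. *)

theory Defs
  imports "HOL-Analysis.Analysis"
begin

text \<open>Points live in an abstract Euclidean space 'a with m = DIM('a).\<close>

definition eps_dense :: "real \<Rightarrow> 'a::euclidean_space set \<Rightarrow> bool" where
  "eps_dense \<epsilon> P \<longleftrightarrow>
     (\<forall>x \<in> convex hull P. infdist x (P \<union> frontier (convex hull P)) < \<epsilon>)"

definition separated :: "real \<Rightarrow> 'a::euclidean_space set \<Rightarrow> bool" where
  "separated s P \<longleftrightarrow> (\<forall>p\<in>P. \<forall>q\<in>P. p \<noteq> q \<longrightarrow> s \<le> dist p q)"

definition is_net :: "real \<Rightarrow> real \<Rightarrow> 'a::euclidean_space set \<Rightarrow> bool" where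
  "is_net \<mu> \<epsilon> P \<longleftrightarrow> finite P \<and> 0 < \<epsilon> \<and> 0 < \<mu> \<and> \<mu> \<le> 1 \<and>
     eps_dense \<epsilon> P \<and> separated (\<mu> * \<epsilon>) P"

definition is_perturbation ::
  "real \<Rightarrow> 'a::euclidean_space set \<Rightarrow> ('a \<Rightarrow> 'a) \<Rightarrow> 'a set \<Rightarrow> bool" where
  "is_perturbation r P \<zeta> P' \<longleftrightarrow> bij_betw \<zeta> P P' \<and> (\<forall>p\<in>P. norm (\<zeta> p - p) \<le> r)"

definition longest_edge :: "'a::euclidean_space set \<Rightarrow> real" where
  "longest_edge \<sigma> = Max {dist p q | p q. p \<in> \<sigma> \<and> q \<in> \<sigma>}"

definition altitude :: "'a::euclidean_space \<Rightarrow> 'a set \<Rightarrow> real" where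
  "altitude p \<sigma> = infdist p (affine hull (\<sigma> - {p}))"

definition thickness :: "'a::euclidean_space set \<Rightarrow> real" where
  "thickness \<sigma> = (if card \<sigma> = 1 then 1
     else Min ((\<lambda>p. altitude p \<sigma>) ` \<sigma>) / (real (card \<sigma> - 1) * longest_edge \<sigma>))"

definition is_simplex :: "'a set \<Rightarrow> bool" where
  "is_simplex \<sigma> \<longleftrightarrow> finite \<sigma> \<and> \<sigma> \<noteq> {}"

definition good :: "real \<Rightarrow> 'a::euclidean_space set \<Rightarrow> bool" where
  "good \<Gamma> \<sigma> \<longleftrightarrow> (\<forall>\<tau>. \<tau> \<subseteq> \<sigma> \<and> \<tau> \<noteq> {} \<longrightarrow> \<Gamma> ^ (card \<tau> - 1) \<le> thickness \<tau>)"

definition flake :: "real \<Rightarrow> 'a::euclidean_space set \<Rightarrow> bool" where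
  "flake \<Gamma> \<sigma> \<longleftrightarrow> is_simplex \<sigma> \<and> \<not> good \<Gamma> \<sigma> \<and>
     (\<forall>\<tau>. \<tau> \<subset> \<sigma> \<and> \<tau> \<noteq> {} \<longrightarrow> good \<Gamma> \<tau>)"

definition circ_ball :: "'a::euclidean_space set \<Rightarrow> 'a \<Rightarrow> real \<Rightarrow> bool" where
  "circ_ball \<sigma> c r \<longleftrightarrow> 0 < r \<and> \<sigma> \<subseteq> frontier (ball c r)"

text \<open>R(sigma) < infinity: some circumscribing ball exists.\<close>
definition circ_finite :: "'a::euclidean_space set \<Rightarrow> bool" where
  "circ_finite \<sigma> \<longleftrightarrow> (\<exists>c r. circ_ball \<sigma> c r)"

definition smallest_circ_ball :: "'a::euclidean_space set \<Rightarrow> 'a \<Rightarrow> real \<Rightarrow> bool" where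
  "smallest_circ_ball \<sigma> c r \<longleftrightarrow> circ_ball \<sigma> c r \<and> (\<forall>c' r'. circ_ball \<sigma> c' r' \<longrightarrow> r \<le> r')"

definition circumcentre :: "'a::euclidean_space set \<Rightarrow> 'a" where
  "circumcentre \<sigma> = fst (SOME cr. smallest_circ_ball \<sigma> (fst cr) (snd cr))"

definition circumradius :: "'a::euclidean_space set \<Rightarrow> real" where
  "circumradius \<sigma> = snd (SOME cr. smallest_circ_ball \<sigma> (fst cr) (snd cr))"

definition circumsphere :: "'a::euclidean_space set \<Rightarrow> 'a set" where
  "circumsphere \<sigma> = sphere (circumcentre \<sigma>) (circumradius \<sigma>) \<inter> affine hull \<sigma>"

definition forbidden_config ::
  "'a::euclidean_space set \<Rightarrow> real \<Rightarrow> real \<Rightarrow> real \<Rightarrow> real \<Rightarrow> 'a set \<Rightarrow> bool" where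
  "forbidden_config P' \<mu>' \<epsilon>' \<Gamma> \<delta> \<tau> \<longleftrightarrow>
     \<tau> \<subseteq> P' \<and> (\<exists>k::nat. k \<le> DIM('a) \<and> card \<tau> = k + 2) \<and> flake \<Gamma> \<tau> \<and>
     (\<exists>p\<in>\<tau>. \<exists>C R. circ_ball (\<tau> - {p}) C R \<and> R < \<epsilon>' \<and>
        \<bar>norm (p - C) - R\<bar> \<le> \<delta> * \<mu>' * \<epsilon>')"

definition hoop_property :: "real \<Rightarrow> 'a::euclidean_space set \<Rightarrow> bool" where
  "hoop_property \<alpha> \<tau> \<longleftrightarrow> (\<forall>p\<in>\<tau>. circ_finite (\<tau> - {p}) \<and>
     infdist p (circumsphere (\<tau> - {p})) \<le> \<alpha> * circumradius (\<tau> - {p}))"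

end

theory Submission
  imports Defs
begin


lemma proj_props:
  fixes S :: "'a::euclidean_space set"
  assumes "affine S" "closed S" "S \<noteq> {}"
  shows "closest_point S x \<in> S" "dist x (closest_point S x) = infdist x S"
    "\<And>y. y \<in> S \<Longrightarrow> inner (x - closest_point S x) (y - closest_point S x) = 0"
proof -
  show c: "closest_point S x \<in> S" using closest_point_in_set assms by blast
  show "dist x (closest_point S x) = infdist x S"
    using assms by (simp add: infdist_eq_setdist setdist_closest_point)
  fix y assume y: "y \<in> S"
  have cv: "convex S" using assms affine_imp_convex by blast
  have 1: "inner (x - closest_point S x) (y - closest_point S x) \<le> 0"
    using closest_point_dot[OF cv assms(2) y] .
  have y2: "closest_point S x + (-1) *\<^sub>R (y - closest_point S x) \<in> S"
    using mem_affine_3_minus[OF assms(1) c y c] .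
  have 2: "inner (x - closest_point S x) ((closest_point S x + (-1) *\<^sub>R (y - closest_point S x)) - closest_point S x) \<le> 0"
    using closest_point_dot[OF cv assms(2) y2] .
  have "inner (x - closest_point S x) ((closest_point S x + (-1) *\<^sub>R (y - closest_point S x)) - closest_point S x)
     = - inner (x - closest_point S x) (y - closest_point S x)"
    by (simp add: inner_diff_right)
  with 1 2 show "inner (x - closest_point S x) (y - closest_point S x) = 0" by linarith
qed

lemma affine_comb_in:
  fixes S :: "'a::real_vector set"
  assumes "affine S" "a \<in> S" "finite B" "B \<subseteq> S"
  shows "a + (\<Sum>v\<in>B. c v *\<^sub>R (v - a)) \<in> S"
  using assms(3,4)
proof (induction B rule: finite_induct)
  case empty then show ?case using assms by simp
next
  case (insert b B)
  then have "a + (\<Sum>v\<in>B. c v *\<^sub>R (v - a)) \<in> S" by auto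
  then have "(a + (\<Sum>v\<in>B. c v *\<^sub>R (v - a))) + c b *\<^sub>R (b - a) \<in> S"
    using mem_affine_3_minus[OF assms(1) _ _ assms(2)] insert by auto
  then show ?case using insert by (simp add: algebra_simps)
qed

lemma aff_rep:
  fixes S :: "'a::euclidean_space set"
  assumes "finite S" "y \<in> affine hull S"
  obtains u where "sum u S = 1" "(\<Sum>v\<in>S. u v *\<^sub>R v) = y"
  using assms affine_hull_finite by blast

lemma aff_hull_props:
  fixes S :: "'a::euclidean_space set"
  assumes "S \<noteq> {}"
  shows "affine (affine hull S)" "closed (affine hull S)" "affine hull S \<noteq> {}"
  using assms by auto

lemma affine_fn_sum:
  fixes S :: "'a::euclidean_space set"
  assumes "finite S" "sum u S = 1"
  shows "inner (\<Sum>v\<in>S. u v *\<^sub>R v) a + b = (\<Sum>v\<in>S. u v * (inner v a + b))"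
proof -
  have "(\<Sum>v\<in>S. u v * (inner v a + b)) = (\<Sum>v\<in>S. u v * inner v a) + (\<Sum>v\<in>S. u v) * b"
    by (simp add: distrib_left sum.distrib sum_distrib_right)
  also have "\<dots> = inner (\<Sum>v\<in>S. u v *\<^sub>R v) a + b"
    using assms by (simp add: inner_sum_left)
  finally show ?thesis by simp
qed

lemma hull_proj:
  fixes S :: "'a::euclidean_space set"
  assumes "S \<noteq> {}"
  shows "closest_point (affine hull S) x \<in> affine hull S"
    "dist x (closest_point (affine hull S) x) = infdist x (affine hull S)"
    "\<And>y. y \<in> affine hull S \<Longrightarrow> inner (x - closest_point (affine hull S) x) (y - closest_point (affine hull S) x) = 0"
  using proj_props[OF aff_hull_props[OF assms]] by auto



lemma circ_ball_dist:
  assumes "circ_ball S c r" "v \<in> S"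
  shows "dist c v = r" "0 < r"
  using assms unfolding circ_ball_def by auto

lemma smallest_exists:
  fixes S :: "'a::euclidean_space set"
  assumes "circ_finite S" "v0 \<in> S" "v1 \<in> S" "v0 \<noteq> v1"
  shows "smallest_circ_ball S (circumcentre S) (circumradius S)"
proof -
  define K where "K = {c. \<forall>v\<in>S. dist c v = dist c v0}"
  have K_eq: "K = (\<Inter>v\<in>S. {c. dist c v - dist c v0 = 0})" unfolding K_def by auto
  have "closed K" unfolding K_eq
    by (intro closed_INT ballI closed_Collect_eq continuous_on_diff continuous_on_dist continuous_on_id continuous_on_const)
  obtain c' r' where cr: "circ_ball S c' r'" using assms(1) unfolding circ_finite_def by blast
  have "c' \<in> K" using circ_ball_dist(1)[OF cr] assms(2) unfolding K_def by auto
  then have Kne: "K \<noteq> {}" by auto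
  define c0 where "c0 = closest_point K v0"
  have c0K: "c0 \<in> K" using closest_point_in_set[OF \<open>closed K\<close> Kne] c0_def by simp
  define r0 where "r0 = dist c0 v0"
  have r0pos: "0 < r0"
  proof (rule ccontr)
    assume "\<not> 0 < r0"
    then have "r0 = 0" using r0_def by (simp add: dist_commute)
    moreover have "dist c0 v1 = r0" using c0K assms(3) unfolding K_def r0_def by auto
    ultimately show False using assms(4) r0_def by simp
  qed
  have ball0: "circ_ball S c0 r0"
    unfolding circ_ball_def using r0pos c0K unfolding K_def r0_def by (auto simp: dist_commute)
  have "smallest_circ_ball S c0 r0"
    unfolding smallest_circ_ball_def
  proof (intro conjI ball0 allI impI)
    fix c'' r'' assume h: "circ_ball S c'' r''"
    then have "c'' \<in> K" using circ_ball_dist(1)[OF h] assms(2) unfolding K_def by auto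
    then have "dist v0 c0 \<le> dist v0 c''"
      using closest_point_le[OF \<open>closed K\<close>] c0_def by blast
    then show "r0 \<le> r''" using circ_ball_dist(1)[OF h assms(2)] r0_def by (simp add: dist_commute)
  qed
  then have "\<exists>cr. smallest_circ_ball S (fst cr) (snd cr)" by (intro exI[of _ "(c0,r0)"]) simp
  from someI_ex[OF this] show ?thesis unfolding circumcentre_def circumradius_def .
qed

lemma pyth_orth:
  fixes a b y :: "'a::euclidean_space"
  assumes "inner (a - b) (y - b) = 0"
  shows "(dist a y)^2 = (dist a b)^2 + (dist b y)^2"
proof -
  have "a - y = (a - b) - (y - b)" by simp
  then have "(norm (a - y))^2 = (norm (a - b))^2 + (norm (y - b))^2"
    using assms by (simp add: power2_norm_eq_inner inner_diff_left inner_diff_right inner_commute)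
  then show ?thesis by (simp add: dist_norm norm_minus_commute)
qed

lemma smallest_centre_in_hull:
  fixes S :: "'a::euclidean_space set"
  assumes "smallest_circ_ball S c r" "v0 \<in> S" "v1 \<in> S" "v0 \<noteq> v1"
  shows "c \<in> affine hull S"
proof (rule ccontr)
  assume nc: "c \<notin> affine hull S"
  let ?H = "affine hull S"
  have Sne: "S \<noteq> {}" using assms(2) by auto
  define c' where "c' = closest_point ?H c"
  have c'H: "c' \<in> ?H" using hull_proj(1)[OF Sne] c'_def by auto
  have orth: "\<And>y. y \<in> ?H \<Longrightarrow> inner (c - c') (y - c') = 0"
    using hull_proj(3)[OF Sne] unfolding c'_def by blast
  have cb: "circ_ball S c r" using assms(1) unfolding smallest_circ_ball_def by blast
  define d where "d = dist c c'"
  have dpos: "0 < d" using nc c'H d_def by auto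
  have pyth: "(dist c' v)^2 = r^2 - d^2" if "v \<in> S" for v
  proof -
    have vH: "v \<in> ?H" using that hull_inc by metis
    have "(dist c v)^2 = d^2 + (dist c' v)^2"
      using pyth_orth[OF orth[OF vH]] unfolding d_def by (simp add: dist_commute)
    then show ?thesis using circ_ball_dist(1)[OF cb that] by simp
  qed
  define r' where "r' = sqrt (r^2 - d^2)"
  have r'v: "dist c' v = r'" if "v \<in> S" for v
    using pyth[OF that] r'_def by (simp add: real_sqrt_unique)
  have rpos: "0 < r" using circ_ball_dist(2)[OF cb assms(2)] .
  have r'pos: "0 < r'"
  proof (rule ccontr)
    assume "\<not> 0 < r'"
    have "0 \<le> r^2 - d^2" using pyth[OF assms(2)] by (metis zero_le_power2)
    then have "r' = 0" using r'_def \<open>\<not> 0 < r'\<close> by simp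
    then have "v0 = c'" "v1 = c'" using r'v[OF assms(2)] r'v[OF assms(3)] by auto
    then show False using assms(4) by simp
  qed
  have "circ_ball S c' r'" unfolding circ_ball_def using r'pos r'v by auto
  then have "r \<le> r'" using assms(1) unfolding smallest_circ_ball_def by blast
  moreover have "r' < r"
  proof -
    have "r^2 - d^2 < r^2" using dpos by simp
    then have "r' < sqrt (r^2)" unfolding r'_def by (rule real_sqrt_less_mono)
    then show ?thesis using rpos by simp
  qed
  ultimately show False by simp
qed

lemma longest_edge_ge:
  assumes "finite \<sigma>" "p \<in> \<sigma>" "q \<in> \<sigma>"
  shows "dist p q \<le> longest_edge \<sigma>"
proof -
  have eq: "{dist p q | p q. p \<in> \<sigma> \<and> q \<in> \<sigma>} = (\<lambda>(p,q). dist p q) ` (\<sigma> \<times> \<sigma>)" by auto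
  have "finite {dist p q | p q. p \<in> \<sigma> \<and> q \<in> \<sigma>}" unfolding eq using assms by simp
  then show ?thesis unfolding longest_edge_def using assms by (intro Max_ge) auto
qed

lemma longest_edge_attained:
  assumes "finite \<sigma>" "\<sigma> \<noteq> {}"
  obtains p q where "p \<in> \<sigma>" "q \<in> \<sigma>" "longest_edge \<sigma> = dist p q"
proof -
  have eq: "{dist p q | p q. p \<in> \<sigma> \<and> q \<in> \<sigma>} = (\<lambda>(p,q). dist p q) ` (\<sigma> \<times> \<sigma>)" by auto
  have "finite {dist p q | p q. p \<in> \<sigma> \<and> q \<in> \<sigma>}" unfolding eq using assms by simp
  moreover have "{dist p q | p q. p \<in> \<sigma> \<and> q \<in> \<sigma>} \<noteq> {}" using assms by auto
  ultimately have "longest_edge \<sigma> \<in> {dist p q | p q. p \<in> \<sigma> \<and> q \<in> \<sigma>}"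
    unfolding longest_edge_def by (rule Max_in)
  then show ?thesis using that by auto
qed



lemma norm_add_sq:
  fixes x w :: "'a::euclidean_space"
  shows "(norm (x + t *\<^sub>R w))^2 = (norm x)^2 + 2*t*inner x w + t^2 * (norm w)^2"
  by (simp only: power2_norm_eq_inner) (simp add: inner_add_left inner_add_right inner_commute power2_eq_square algebra_simps)

lemma sum_comb_shift:
  fixes B :: "'a::real_vector set"
  shows "(\<Sum>v\<in>B. u v *\<^sub>R (v - a)) = (\<Sum>v\<in>B. u v *\<^sub>R v) - (sum u B) *\<^sub>R a"
  by (simp add: scaleR_diff_right sum_subtractf scaleR_sum_left)

lemma split_comb:
  fixes \<sigma> :: "'a::euclidean_space set"
  assumes "finite \<sigma>" "p \<in> \<sigma>" "sum u \<sigma> = 1"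
  shows "sum u (\<sigma> - {p}) = 1 - u p"
    "(\<Sum>v\<in>\<sigma>. u v *\<^sub>R v) = u p *\<^sub>R p + (\<Sum>v\<in>\<sigma> - {p}. u v *\<^sub>R v)"
proof -
  have e: "\<sigma> = insert p (\<sigma> - {p})" using assms(2) by auto
  have f: "finite (\<sigma> - {p})" using assms(1) by simp
  show "sum u (\<sigma> - {p}) = 1 - u p"
    using sum.insert[OF f, of p u] e assms(3) by simp
  show "(\<Sum>v\<in>\<sigma>. u v *\<^sub>R v) = u p *\<^sub>R p + (\<Sum>v\<in>\<sigma> - {p}. u v *\<^sub>R v)"
    using sum.insert[OF f, of p "\<lambda>v. u v *\<^sub>R v"] e by simp
qed

lemma alt_transfer:
  fixes \<tau> :: "'a::euclidean_space set"
  assumes fin: "finite \<tau>" and q0: "q0 \<in> \<tau>" and q: "q \<in> \<tau>" "q \<noteq> q0"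
    and v1: "v1 \<in> \<tau>" "v1 \<noteq> q" "v1 \<noteq> q0"
    and D0: "infdist q0 (affine hull (\<tau> - {q0})) = D0"
    and G: "G \<le> infdist q0 (affine hull (\<tau> - {q} - {q0}))" "D0 < G"
    and L: "\<And>a b. a \<in> \<tau> \<Longrightarrow> b \<in> \<tau> \<Longrightarrow> dist a b \<le> L"
  shows "infdist q (affine hull (\<tau> - {q})) \<le> D0 * L / (G - D0)"
proof -
  define H0 where "H0 = affine hull (\<tau> - {q0})"
  have ne0: "\<tau> - {q0} \<noteq> {}" using q by auto
  define x where "x = closest_point H0 q0"
  have xH: "x \<in> H0" and dx: "dist q0 x = D0"
    using hull_proj(1,2)[OF ne0, of q0] D0 unfolding x_def H0_def by auto
  obtain u where u1: "sum u (\<tau> - {q0}) = 1" and ux: "(\<Sum>v\<in>\<tau> - {q0}. u v *\<^sub>R v) = x"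
    using aff_rep[of "\<tau> - {q0}" x] fin xH H0_def by auto
  define B where "B = \<tau> - {q} - {q0}"
  have eqB: "\<tau> - {q0} - {q} = B" unfolding B_def by auto
  have finB: "finite B" using fin B_def by simp
  have v1B: "v1 \<in> B" using v1 B_def by simp
  have qin: "q \<in> \<tau> - {q0}" using q by simp
  have sB: "sum u B = 1 - u q" and xs: "x = u q *\<^sub>R q + (\<Sum>v\<in>B. u v *\<^sub>R v)"
    using split_comb[OF _ qin u1] fin ux eqB by auto
  define z where "z = v1 + (\<Sum>v\<in>B. u v *\<^sub>R (v - v1))"
  have zA: "z \<in> affine hull B"
    unfolding z_def by (rule affine_comb_in) (use v1B finB hull_inc in auto)
  have zeq: "z = (\<Sum>v\<in>B. u v *\<^sub>R v) + u q *\<^sub>R v1"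
    unfolding z_def sum_comb_shift sB by (simp add: algebra_simps)
  have xz: "x - z = u q *\<^sub>R (q - v1)" using xs zeq by (simp add: algebra_simps)
  have "G \<le> infdist q0 (affine hull B)" using G(1) B_def by simp
  also have "\<dots> \<le> dist q0 z" using zA by (rule infdist_le)
  also have "\<dots> \<le> dist q0 x + dist x z" by (rule dist_triangle)
  also have "dist x z = \<bar>u q\<bar> * dist q v1" using xz by (simp add: dist_norm)
  also have "\<dots> \<le> \<bar>u q\<bar> * L" using L[OF q(1) v1(1)] by (simp add: mult_left_mono)
  finally have Gle: "G - D0 \<le> \<bar>u q\<bar> * L" using dx by simp
  have Lpos: "0 \<le> L" using L[OF q0 q0] by simp
  have uqpos: "0 < \<bar>u q\<bar>" using Gle G(2) by (metis abs_ge_zero diff_gt_0_iff_gt less_eq_real_def mult_eq_0_iff not_less)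
  define y where "y = q0 + (\<Sum>v\<in>B. (- u v / u q) *\<^sub>R (v - q0))"
  have yA: "y \<in> affine hull (\<tau> - {q})"
  proof -
    have a: "q0 \<in> affine hull (\<tau> - {q})" using q0 q by (intro hull_inc) auto
    have b: "B \<subseteq> affine hull (\<tau> - {q})" using B_def hull_subset[of "\<tau> - {q}" affine] by auto
    show ?thesis unfolding y_def by (rule affine_comb_in[OF affine_affine_hull a finB b])
  qed
  have "u q *\<^sub>R (\<Sum>v\<in>B. (- u v / u q) *\<^sub>R (v - q0)) = - (\<Sum>v\<in>B. u v *\<^sub>R (v - q0))"
    using uqpos by (simp add: scaleR_sum_right sum_negf[symmetric])
  then have "u q *\<^sub>R (q - y) = x - q0"
    unfolding y_def sum_comb_shift xs sB by (simp add: algebra_simps)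
  then have "\<bar>u q\<bar> * dist q y = D0"
    using dx by (metis dist_commute dist_norm norm_minus_commute norm_scaleR)
  then have dqy: "dist q y = D0 / \<bar>u q\<bar>" using uqpos by (simp add: field_simps)
  have D0nn: "0 \<le> D0" using D0 infdist_nonneg by metis
  have "infdist q (affine hull (\<tau> - {q})) \<le> dist q y" using yA by (rule infdist_le)
  also have "\<dots> = D0 / \<bar>u q\<bar>" by (rule dqy)
  also have "\<dots> \<le> D0 * L / (G - D0)"
  proof -
    have "D0 * (G - D0) \<le> D0 * (\<bar>u q\<bar> * L)" using Gle D0nn by (simp add: mult_left_mono)
    then show ?thesis using uqpos G(2) by (simp add: field_simps)
  qed
  finally show ?thesis .
qed



lemma up_bound:
  fixes \<sigma> :: "'a::euclidean_space set"
  assumes fin: "finite \<sigma>" and p: "p \<in> \<sigma>" and ne: "\<sigma> - {p} \<noteq> {}"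
    and u1: "sum u \<sigma> = 1"
  obtains a where "a \<in> affine hull (\<sigma> - {p})" "dist p a = infdist p (affine hull (\<sigma> - {p}))"
    "\<bar>u p\<bar> * infdist p (affine hull (\<sigma> - {p})) \<le> dist (\<Sum>v\<in>\<sigma>. u v *\<^sub>R v) a"
proof -
  define B where "B = \<sigma> - {p}"
  define A where "A = affine hull B"
  define a where "a = closest_point A p"
  have aA: "a \<in> A" and da: "dist p a = infdist p A"
    and orth: "\<And>y. y \<in> A \<Longrightarrow> inner (p - a) (y - a) = 0"
    using hull_proj[OF ne[folded B_def], where x=p] unfolding a_def A_def by auto
  define y where "y = (\<Sum>v\<in>\<sigma>. u v *\<^sub>R v)"
  have sB: "sum u B = 1 - u p" and ys: "y = u p *\<^sub>R p + (\<Sum>v\<in>B. u v *\<^sub>R v)"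
    using split_comb[OF fin p u1] unfolding B_def y_def by auto
  have finB: "finite B" using fin B_def by simp
  define z where "z = a + (\<Sum>v\<in>B. u v *\<^sub>R (v - a))"
  have zA: "z \<in> A" unfolding z_def A_def
    by (rule affine_comb_in[OF affine_affine_hull aA[unfolded A_def] finB hull_subset])
  have zeq: "y - z = u p *\<^sub>R (p - a)"
    unfolding z_def sum_comb_shift sB ys by (simp add: algebra_simps)
  have "inner (y - a) (p - a) = inner (z - a) (p - a) + inner (y - z) (p - a)"
    by (simp add: inner_diff_left)
  also have "inner (z - a) (p - a) = 0" using orth[OF zA] by (simp add: inner_commute)
  also have "inner (y - z) (p - a) = u p * (norm (p - a))^2"
    using zeq by (simp add: power2_norm_eq_inner)
  finally have ip: "inner (y - a) (p - a) = u p * (norm (p - a))^2" by simp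
  have "\<bar>u p\<bar> * (norm (p - a))^2 \<le> norm (y - a) * norm (p - a)"
    using ip Cauchy_Schwarz_ineq2[of "y - a" "p - a"] by (simp add: abs_mult)
  then have "\<bar>u p\<bar> * norm (p - a) \<le> norm (y - a)"
    by (cases "norm (p - a) = 0") (auto simp: power2_eq_square mult.assoc[symmetric] mult_le_cancel_right)
  then have "\<bar>u p\<bar> * infdist p A \<le> dist y a" using da by (simp add: dist_norm)
  then show ?thesis using that[of a] aA da unfolding A_def B_def y_def by auto
qed

lemma circ_construct:
  fixes \<sigma> :: "'a::euclidean_space set"
  assumes fin: "finite \<sigma>" and p: "p \<in> \<sigma>" and v0: "v0 \<in> \<sigma>" "v0 \<noteq> p"
    and onS: "\<And>v. v \<in> \<sigma> - {p} \<Longrightarrow> dist C v = R"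
    and W: "0 < infdist p (affine hull (\<sigma> - {p}))"
  shows "\<exists>c' r'. circ_ball \<sigma> c' r' \<and> r' \<le> R + \<bar>(dist C p)^2 - R^2\<bar> / (2 * infdist p (affine hull (\<sigma> - {p})))"
proof -
  define B where "B = \<sigma> - {p}"
  have ne: "B \<noteq> {}" using v0 B_def by auto
  define A where "A = affine hull B"
  define a where "a = closest_point A p"
  define W where "W = infdist p A"
  have aA: "a \<in> A" and da: "dist p a = W"
    and orth: "\<And>y. y \<in> A \<Longrightarrow> inner (p - a) (y - a) = 0"
    using hull_proj[OF ne, where x=p] unfolding a_def A_def W_def by auto
  have Wpos: "0 < W" using W unfolding W_def A_def B_def .
  define w where "w = p - a"
  have nw: "norm w = W" using da w_def by (simp add: dist_norm)
  define t where "t = ((dist C p)^2 - R^2) / (2 * W^2)"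
  define c' where "c' = C + t *\<^sub>R w"
  define K where "K = R^2 + 2 * t * inner (C - a) w + t^2 * W^2"
  have key: "(dist c' v)^2 = (norm (C - v))^2 + 2*t*inner (C - v) w + t^2 * W^2" for v
  proof -
    have "c' - v = (C - v) + t *\<^sub>R w" unfolding c'_def by simp
    then have "dist c' v = norm ((C - v) + t *\<^sub>R w)" by (metis dist_norm)
    then show ?thesis using norm_add_sq[of "C - v" t w] nw by simp
  qed
  have onB: "(dist c' v)^2 = K" if "v \<in> B" for v
  proof -
    have "v \<in> A" using that A_def hull_inc by metis
    then have "inner w (v - a) = 0" using orth w_def by simp
    then have "inner (C - v) w = inner (C - a) w"
      by (simp add: inner_diff_left inner_diff_right inner_commute)
    moreover have "norm (C - v) = R" using onS[of v] that B_def by (simp add: dist_norm)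
    ultimately show ?thesis using key[of v] K_def by simp
  qed
  have onp: "(dist c' p)^2 = K"
  proof -
    have "inner (C - p) w = inner (C - a) w - W^2"
    proof -
      have "W^2 = inner w w" using nw power2_norm_eq_inner[of w] by simp
      then show ?thesis by (simp add: w_def inner_diff_left inner_diff_right inner_commute)
    qed
    then have "(dist c' p)^2 = (dist C p)^2 + 2*t*(inner (C - a) w - W^2) + t^2 * W^2"
      using key[of p] by (simp add: dist_norm)
    also have "\<dots> = K" unfolding K_def t_def using Wpos by (simp add: field_simps power2_eq_square)
    finally show ?thesis .
  qed
  define r' where "r' = dist c' v0"
  have v0B: "v0 \<in> B" using v0 B_def by simp
  have all: "dist c' v = r'" if "v \<in> \<sigma>" for v
  proof -
    have "(dist c' v)^2 = (dist c' v0)^2"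
      using onB[OF v0B] onp onB[of v] that B_def by (cases "v = p") auto
    then show ?thesis unfolding r'_def by (simp add: power2_eq_iff_nonneg)
  qed
  have r'pos: "0 < r'"
  proof (rule ccontr)
    assume "\<not> 0 < r'"
    then have "r' = 0" using r'_def by simp
    then have "p = c'" "v0 = c'" using all[OF p] all[OF v0(1)] by auto
    then show False using v0 by simp
  qed
  have cb: "circ_ball \<sigma> c' r'" unfolding circ_ball_def using r'pos all by auto
  have "r' \<le> dist C v0 + dist C c'" unfolding r'_def by (metis dist_triangle dist_commute)
  also have "dist C v0 = R" using onS v0 by simp
  also have "dist C c' = \<bar>t\<bar> * W" unfolding c'_def using nw by (simp add: dist_norm)
  also have "\<bar>t\<bar> * W = \<bar>(dist C p)^2 - R^2\<bar> / (2 * W)"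
    unfolding t_def using Wpos by (simp add: abs_divide power2_eq_square field_simps)
  finally show ?thesis using cb unfolding W_def A_def B_def by blast
qed



lemma sphere_dist:
  fixes c y v :: "'a::euclidean_space"
  assumes r: "0 < r" and H: "affine H" "c \<in> H" "y \<in> H" "v \<in> H" and v: "dist c v = r"
  shows "infdist y (sphere c r \<inter> H) \<le> \<bar>(dist y c)^2 - r^2\<bar> / r"
proof (cases "y = c")
  case True
  have "v \<in> sphere c r \<inter> H" using H v by simp
  then have "infdist y (sphere c r \<inter> H) \<le> dist y v" by (rule infdist_le)
  also have "\<dots> = \<bar>(dist y c)^2 - r^2\<bar> / r" using True v r by (simp add: power2_eq_square)
  finally show ?thesis .
next
  case False
  define n where "n = norm (y - c)"
  have npos: "0 < n" using False n_def by simp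
  define s where "s = c + (r / n) *\<^sub>R (y - c)"
  have sH: "s \<in> H" unfolding s_def using mem_affine_3_minus[OF H(1,2,3,2)] .
  have "dist c s = r" unfolding s_def n_def using r npos n_def by (simp add: dist_norm)
  then have sS: "s \<in> sphere c r \<inter> H" using sH by simp
  have "y - s = (1 - r / n) *\<^sub>R (y - c)" unfolding s_def by (simp add: algebra_simps)
  then have "dist y s = \<bar>1 - r / n\<bar> * n" by (simp add: dist_norm n_def)
  also have "\<dots> = \<bar>n - r\<bar>"
  proof -
    have "(1 - r / n) * n = n - r" using npos by (simp add: field_simps)
    then show ?thesis using npos by (metis abs_mult abs_of_pos)
  qed
  also have "\<dots> = \<bar>n^2 - r^2\<bar> / (n + r)"
  proof -
    have "n^2 - r^2 = (n - r) * (n + r)" by (simp add: power2_eq_square algebra_simps)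
    then have "\<bar>n^2 - r^2\<bar> = \<bar>n - r\<bar> * (n + r)" using npos r by (simp add: abs_mult)
    then show ?thesis using npos r by simp
  qed
  also have "\<dots> \<le> \<bar>n^2 - r^2\<bar> / r"
    using npos r by (intro divide_left_mono) auto
  finally have "dist y s \<le> \<bar>(dist y c)^2 - r^2\<bar> / r" by (simp add: n_def dist_norm)
  moreover have "infdist y (sphere c r \<inter> H) \<le> dist y s" using sS by (rule infdist_le)
  ultimately show ?thesis by simp
qed

lemma sq_diff_affine:
  fixes x c C :: "'a::euclidean_space"
  shows "(dist x c)^2 - r^2 - ((dist x C)^2 - R^2)
    = inner x (2 *\<^sub>R (C - c)) + (inner c c - inner C C - r^2 + R^2)"
proof -
  have e: "(dist x y)^2 = inner x x - 2 * inner x y + inner y y" for y :: 'a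
  proof -
    have "(dist x y)^2 = inner (x - y) (x - y)" by (simp add: dist_norm power2_norm_eq_inner)
    also have "\<dots> = inner x x - 2 * inner x y + inner y y"
      by (simp add: inner_diff_left inner_diff_right inner_commute[of y x])
    finally show ?thesis .
  qed
  show ?thesis unfolding e by (simp add: inner_diff_right inner_scaleR_right)
qed

lemma f_identity:
  fixes \<sigma> :: "'a::euclidean_space set"
  assumes "finite \<sigma>" "sum u \<sigma> = 1"
  shows "(dist (\<Sum>v\<in>\<sigma>. u v *\<^sub>R v) c)^2 - r^2 - ((dist (\<Sum>v\<in>\<sigma>. u v *\<^sub>R v) C)^2 - R^2)
    = (\<Sum>v\<in>\<sigma>. u v * ((dist v c)^2 - r^2 - ((dist v C)^2 - R^2)))"
  unfolding sq_diff_affine by (rule affine_fn_sum[OF assms])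



lemma le_div_aux: "0 < (d::real) \<Longrightarrow> A \<le> m / d \<Longrightarrow> A * d \<le> m"
  by (simp add: pos_le_divide_eq)

lemma less_div_aux: "0 < (d::real) \<Longrightarrow> m / d < A \<Longrightarrow> m < A * d"
  by (simp add: pos_divide_less_eq)

lemma thickness_eq:
  assumes "card \<sigma> \<noteq> 1"
  shows "thickness \<sigma> = Min ((\<lambda>p. altitude p \<sigma>) ` \<sigma>) / (real (card \<sigma> - 1) * longest_edge \<sigma>)"
  using assms unfolding thickness_def by simp

lemma good_alt:
  fixes \<sigma> :: "'a::euclidean_space set"
  assumes g: "good \<Gamma> \<sigma>" and fin: "finite \<sigma>" and c2: "2 \<le> card \<sigma>" and v: "v \<in> \<sigma>"
    and Lpos: "0 < longest_edge \<sigma>"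
  shows "\<Gamma>^(card \<sigma> - 1) * (real (card \<sigma> - 1) * longest_edge \<sigma>) \<le> altitude v \<sigma>"
proof -
  have ne: "\<sigma> \<noteq> {}" using v by auto
  have "\<Gamma>^(card \<sigma> - 1) \<le> thickness \<sigma>" using g ne unfolding good_def by blast
  also have "\<dots> = Min ((\<lambda>p. altitude p \<sigma>) ` \<sigma>) / (real (card \<sigma> - 1) * longest_edge \<sigma>)"
    using c2 by (intro thickness_eq) simp
  finally have 1: "\<Gamma>^(card \<sigma> - 1) \<le> Min ((\<lambda>p. altitude p \<sigma>) ` \<sigma>) / (real (card \<sigma> - 1) * longest_edge \<sigma>)" .
  have pos: "0 < real (card \<sigma> - 1) * longest_edge \<sigma>" using c2 Lpos by simp
  have "Min ((\<lambda>p. altitude p \<sigma>) ` \<sigma>) \<le> altitude v \<sigma>" using fin v by simp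
  with le_div_aux[OF pos 1] show ?thesis by linarith
qed

lemma bad_alt:
  fixes \<sigma> :: "'a::euclidean_space set"
  assumes fl: "flake \<Gamma> \<sigma>" and c2: "2 \<le> card \<sigma>" and Lpos: "0 < longest_edge \<sigma>"
  shows "\<exists>q0\<in>\<sigma>. altitude q0 \<sigma> < \<Gamma>^(card \<sigma> - 1) * (real (card \<sigma> - 1) * longest_edge \<sigma>)"
proof -
  have fin: "finite \<sigma>" and ne: "\<sigma> \<noteq> {}" using fl unfolding flake_def is_simplex_def by auto
  obtain \<tau> where t: "\<tau> \<subseteq> \<sigma>" "\<tau> \<noteq> {}" "\<not> \<Gamma>^(card \<tau> - 1) \<le> thickness \<tau>"
    using fl unfolding flake_def good_def by blast
  have "\<tau> = \<sigma>"
  proof (rule ccontr)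
    assume "\<tau> \<noteq> \<sigma>"
    then have "good \<Gamma> \<tau>" using fl t unfolding flake_def by blast
    then show False using t unfolding good_def by blast
  qed
  then have "thickness \<sigma> < \<Gamma>^(card \<sigma> - 1)" using t by simp
  then have 1: "Min ((\<lambda>p. altitude p \<sigma>) ` \<sigma>) / (real (card \<sigma> - 1) * longest_edge \<sigma>) < \<Gamma>^(card \<sigma> - 1)"
    using thickness_eq[of \<sigma>] c2 by simp
  have pos: "0 < real (card \<sigma> - 1) * longest_edge \<sigma>" using c2 Lpos by simp
  have "Min ((\<lambda>p. altitude p \<sigma>) ` \<sigma>) \<in> (\<lambda>p. altitude p \<sigma>) ` \<sigma>" using fin ne by simp
  then obtain q0 where "q0 \<in> \<sigma>" "altitude q0 \<sigma> = Min ((\<lambda>p. altitude p \<sigma>) ` \<sigma>)" by auto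
  with less_div_aux[OF pos 1] show ?thesis by (metis)
qed

lemma flake_card2:
  fixes \<sigma> :: "'a::euclidean_space set"
  assumes fl: "flake \<Gamma> \<sigma>" and c: "card \<sigma> = 2" and G: "\<Gamma> \<le> 1"
  shows False
proof -
  obtain a b where ab: "\<sigma> = {a, b}" "a \<noteq> b" using c by (metis card_2_iff)
  have fin: "finite \<sigma>" using ab by simp
  have L: "longest_edge \<sigma> = dist a b"
  proof (rule antisym)
    obtain p q where "p \<in> \<sigma>" "q \<in> \<sigma>" "longest_edge \<sigma> = dist p q"
      using longest_edge_attained[OF fin] ab by blast
    then show "longest_edge \<sigma> \<le> dist a b" using ab by (auto simp: dist_commute)
    show "dist a b \<le> longest_edge \<sigma>" using longest_edge_ge[OF fin] ab by simp
  qed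
  have alt: "altitude v \<sigma> = dist a b" if "v \<in> \<sigma>" for v
  proof -
    have "v = a \<or> v = b" using that ab by auto
    then show ?thesis using ab unfolding altitude_def
      by (auto simp: insert_Diff_if dist_commute)
  qed
  have Lpos: "0 < longest_edge \<sigma>" using L ab by simp
  obtain q0 where "q0 \<in> \<sigma>" "altitude q0 \<sigma> < \<Gamma>^(card \<sigma> - 1) * (real (card \<sigma> - 1) * longest_edge \<sigma>)"
    using bad_alt[OF fl _ Lpos] c by auto
  then have "dist a b < \<Gamma> * dist a b" using alt L c by simp
  moreover have "\<Gamma> * dist a b \<le> dist a b" using mult_right_mono[OF G zero_le_dist[of a b]] by simp
  ultimately show False by simp
qed



lemma numeric_final:
  fixes e mu G M R eta Lb D F r :: real
  assumes e: "0 < e" and mu: "0 < mu" "mu \<le> 1" and G: "0 < G" "G \<le> 2 * mu^2 / 75"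
    and M: "mu * e / 2 \<le> M" "M \<le> 2 * R" and R: "R \<le> 5 * e / 4"
    and eta: "0 \<le> eta" "eta \<le> G * M" and Lb: "Lb = 2 * R + 2 * eta"
    and D: "0 \<le> D" "D \<le> 2 * G * Lb^2 / (M - 2 * G * Lb)"
    and F: "F \<le> D * (2 * R + 2 * eta + D) + G * (D + 2 * Lb) * (2 * R + eta)"
    and r: "M / 2 \<le> r"
  shows "D + F / r \<le> 2 * (16 / mu)^3 * G * r"
proof -
  have G1: "G \<le> 2 * mu / 75"
  proof -
    have "mu^2 \<le> mu" using mu by (simp add: power2_eq_square mult_left_le_one_le)
    then show ?thesis using G by linarith
  qed
  have G2: "G \<le> 2 / 75" using G1 mu by linarith
  have Mpos: "0 < M" using M mult_pos_pos[OF mu(1) e] by linarith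
  have Rnn: "0 \<le> R" using M Mpos by linarith
  have eta2: "eta \<le> e / 15"
  proof -
    have "G * M \<le> (2/75) * (5 * e / 2)" using G2 M R G Mpos by (intro mult_mono) auto
    then show ?thesis using eta by linarith
  qed
  have Lb3: "Lb \<le> 3 * e" using Lb R eta2 e by linarith
  have Lbnn: "0 \<le> Lb" using Lb Rnn eta by linarith
  have b0: "G * Lb \<le> (2 * mu / 75) * (3 * e)"
    using G1 Lb3 G Lbnn by (intro mult_mono) auto
  have b1: "2 * G * Lb \<le> 12/75 * (mu * e)" using b0 by (simp add: algebra_simps)
  have me: "0 < mu * e" using mu e by simp
  have b2: "M - 2 * G * Lb \<ge> mu * e / 3"
    using b1 M me by linarith
  have den: "0 < M - 2 * G * Lb" using b2 me by linarith
  have Dc: "D \<le> 54 * G * e / mu"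
  proof -
    have "2 * G * Lb^2 \<le> 2 * G * (3 * e)^2"
      using Lb3 Lbnn G by (intro mult_left_mono power_mono) auto
    then have "2 * G * Lb^2 / (M - 2 * G * Lb) \<le> 2 * G * (3 * e)^2 / (mu * e / 3)"
      using b2 den mu e G by (intro frac_le) auto
    also have "\<dots> = 54 * G * e / mu" using mu e by (simp add: field_simps power2_eq_square)
    finally show ?thesis using D by linarith
  qed
  have Dd: "D \<le> 3 * e / 2"
  proof -
    have "54 * G * e / mu \<le> 54 * (2 * mu / 75) * e / mu"
      using G1 mu e by (intro divide_right_mono mult_right_mono mult_left_mono) auto
    also have "\<dots> = 108 * e / 75" using mu by (simp add: field_simps)
    finally show ?thesis using Dc e by linarith
  qed
  have f1: "2 * R + 2 * eta + D \<le> 5 * e" using R eta2 Dd e by linarith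
  have f2: "D + 2 * Lb \<le> 8 * e" using Dd Lb3 e by linarith
  have f3: "2 * R + eta \<le> 3 * e" using R eta2 e by linarith
  have Fc: "F \<le> 5 * e * D + 24 * G * e^2"
  proof -
    have "D * (2 * R + 2 * eta + D) \<le> D * (5 * e)" using f1 D by (intro mult_left_mono) auto
    moreover have "G * (D + 2 * Lb) * (2 * R + eta) \<le> G * (8 * e) * (3 * e)"
    proof -
      have a: "G * (D + 2 * Lb) \<le> G * (8 * e)" using f2 G by (simp add: mult_left_mono)
      have b: "0 \<le> G * (8 * e)" using G e by simp
      have c: "0 \<le> 2 * R + eta" using Rnn eta by simp
      show ?thesis using mult_mono[OF a f3 b c] .
    qed
    ultimately show ?thesis using F by (simp add: power2_eq_square algebra_simps)
  qed
  have Fc2: "F \<le> 294 * G * e^2 / mu"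
  proof -
    have "5 * e * D \<le> 5 * e * (54 * G * e / mu)" using Dc e by (intro mult_left_mono) auto
    moreover have "24 * G * e^2 \<le> 24 * G * e^2 / mu"
      using mu G e by (simp add: le_divide_eq mult_left_le_one_le)
    moreover have "5 * e * (54 * G * e / mu) = 270 * G * e^2 / mu" by (simp add: power2_eq_square)
    moreover have "270 * G * e^2 / mu + 24 * G * e^2 / mu = 294 * G * e^2 / mu" by (simp add: field_simps)
    ultimately show ?thesis using Fc by linarith
  qed
  have rpos: "mu * e / 4 \<le> r" using M r by linarith
  have rp: "0 < r" using rpos me by linarith
  have Fr: "F / r \<le> 1176 * G * e / mu^2"
  proof (cases "F \<le> 0")
    case True
    then have "F / r \<le> 0" using rp by (simp add: divide_nonpos_pos)
    moreover have "0 \<le> 1176 * G * e / mu^2" using G e mu by simp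
    ultimately show ?thesis by linarith
  next
    case False
    have "F / r \<le> (294 * G * e^2 / mu) / (mu * e / 4)"
      using Fc2 rpos False mu e by (intro frac_le) auto
    also have "\<dots> = 1176 * G * e / mu^2" using mu e by (simp add: field_simps power2_eq_square)
    finally show ?thesis .
  qed
  have Dc2: "D \<le> 54 * G * e / mu^2"
  proof -
    have "54 * G * e / mu \<le> 54 * G * e / mu^2"
      using mu G e by (intro divide_left_mono) (auto simp: power2_eq_square mult_left_le_one_le)
    then show ?thesis using Dc by linarith
  qed
  have "54 * G * e / mu^2 + 1176 * G * e / mu^2 = 1230 * G * e / mu^2" by (simp add: field_simps)
  then have lhs: "D + F / r \<le> 1230 * G * e / mu^2" using Dc2 Fr by linarith
  have "2048 * G * e / mu^2 \<le> 2 * (16 / mu)^3 * G * r"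
  proof -
    have "2 * (16 / mu)^3 * G * (mu * e / 4) = 2048 * G * e / mu^2"
      using mu by (simp add: field_simps power2_eq_square power3_eq_cube)
    moreover have "2 * (16 / mu)^3 * G * (mu * e / 4) \<le> 2 * (16 / mu)^3 * G * r"
      using rpos mu G by (intro mult_left_mono) auto
    ultimately show ?thesis by simp
  qed
  moreover have "1230 * G * e / mu^2 \<le> 2048 * G * e / mu^2" using G e mu by (simp add: divide_right_mono)
  ultimately show ?thesis using lhs by linarith
qed



lemma sq_dist_diff:
  fixes x y C :: "'a::euclidean_space"
  shows "\<bar>(dist x C)^2 - (dist y C)^2\<bar> \<le> dist x y * (2 * dist y C + dist x y)"
proof -
  define a where "a = dist x C"
  define b where "b = dist y C"
  define d where "d = dist x y"
  have ab: "\<bar>a - b\<bar> \<le> d" unfolding a_def b_def d_def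
    by (metis dist_triangle dist_commute abs_le_iff diff_le_eq add.commute minus_diff_eq)
  have a: "a \<le> b + d" using ab by linarith
  have nn: "0 \<le> a" "0 \<le> b" "0 \<le> d" unfolding a_def b_def d_def by auto
  have "\<bar>a^2 - b^2\<bar> = \<bar>a - b\<bar> * (a + b)"
  proof -
    have "a^2 - b^2 = (a - b) * (a + b)" by (simp add: power2_eq_square algebra_simps)
    then show ?thesis using nn by (simp add: abs_mult)
  qed
  also have "\<dots> \<le> d * (2 * b + d)" using ab a nn by (intro mult_mono) auto
  finally show ?thesis unfolding a_def b_def d_def .
qed

lemma altitude_le:
  assumes "w \<in> \<sigma>" "w \<noteq> v"
  shows "altitude v \<sigma> \<le> dist v w"
  unfolding altitude_def using assms by (intro infdist_le hull_inc) auto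

lemma sum_single:
  assumes "finite \<sigma>" "p \<in> \<sigma>" "\<And>v. v \<in> \<sigma> \<Longrightarrow> v \<noteq> p \<Longrightarrow> f v = (0::real)"
  shows "sum f \<sigma> = f p"
proof -
  have "sum f \<sigma> = f p + sum f (\<sigma> - {p})" using assms by (simp add: sum.remove)
  also have "sum f (\<sigma> - {p}) = 0" using assms by (intro sum.neutral) auto
  finally show ?thesis by simp
qed



lemma numeric2:
  fixes e mu G M R eta Lb :: real
  assumes e: "0 < e" and mu: "0 < mu" "mu \<le> 1" and G: "0 < G" "G \<le> 2 * mu^2 / 75"
    and M: "mu * e / 2 \<le> M" "M \<le> 2 * R" and R: "R \<le> 5 * e / 4"
    and eta: "0 \<le> eta" "eta \<le> G * M" and Lb: "Lb = 2 * R + 2 * eta"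
  shows "2 * G * Lb < M"
proof -
  have G1: "G \<le> 2 * mu / 75"
  proof -
    have "mu^2 \<le> mu" using mu by (simp add: power2_eq_square mult_left_le_one_le)
    then show ?thesis using G by linarith
  qed
  have G2: "G \<le> 2 / 75" using G1 mu by linarith
  have Mpos: "0 < M" using M mult_pos_pos[OF mu(1) e] by linarith
  have Rnn: "0 \<le> R" using M Mpos by linarith
  have eta2: "eta \<le> e / 15"
  proof -
    have "G * M \<le> (2/75) * (5 * e / 2)" using G2 M R G Mpos by (intro mult_mono) auto
    then show ?thesis using eta by linarith
  qed
  have Lb3: "Lb \<le> 3 * e" using Lb R eta2 e by linarith
  have Lbnn: "0 \<le> Lb" using Lb Rnn eta by linarith
  have b0: "G * Lb \<le> (2 * mu / 75) * (3 * e)"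
    using G1 Lb3 G Lbnn by (intro mult_mono) auto
  have b1: "2 * G * Lb \<le> 12/75 * (mu * e)" using b0 by (simp add: algebra_simps)
  have me: "0 < mu * e" using mu e by simp
  show ?thesis using b1 M me by linarith
qed

lemma numeric3:
  fixes e G M R eta :: real
  assumes e: "0 < e" and G: "0 < G" "G \<le> 2 / 75" and R: "0 \<le> R" "R \<le> 5 * e / 4"
    and eta: "0 \<le> eta" "eta \<le> G * M" and M: "M \<le> 2 * R" "0 \<le> M"
  shows "R + G * (2 * R + eta) / 2 < 2 * e"
proof -
  have "G * M \<le> (2/75) * (2 * R)" using G M R eta by (intro mult_mono) auto
  then have eta2: "eta \<le> 4 * R / 75" using eta by linarith
  have X: "G * (2 * R + eta) \<le> (2/75) * (2 * R + 4 * R / 75)" using G eta2 eta R by (intro mult_mono) auto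
  define X where "X = G * (2 * R + eta)"
  have "X \<le> (2/75) * (2 * R + 4 * R / 75)" using X X_def by simp
  moreover have "(2/75) * (2 * R + 4 * R / 75) = 308/5625 * R" by (simp add: field_simps)
  ultimately have "X \<le> 308/5625 * R" by simp
  then have "R + X / 2 < 2 * e" using R e by linarith
  then show ?thesis using X_def by simp
qed

lemma two_elems:
  assumes "finite S" "2 \<le> card S"
  obtains a b where "a \<in> S" "b \<in> S" "a \<noteq> b"
proof -
  have "\<not> card S \<le> Suc 0" using assms by simp
  then show ?thesis using that card_le_Suc0_iff_eq[OF assms(1)] by blast
qed



lemma cancel_aux: "(Y::real) \<noteq> 0 \<Longrightarrow> a * Y * b / (2 * Y) = a * b / 2"
  by (simp add: field_simps)

theorem mainTheorem10:
  fixes P P' \<tau> :: "'a::euclidean_space set"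
    and \<zeta> :: "'a \<Rightarrow> 'a"
    and \<mu> \<epsilon> \<rho>0 \<Gamma>0 \<delta>0 :: real
  assumes "is_net \<mu> \<epsilon> P"
    and "0 < \<rho>0" and "\<rho>0 \<le> \<mu> / 4"
    and "is_perturbation (\<rho>0 * \<epsilon>) P \<zeta> P'"
    and "0 < \<Gamma>0" and "\<Gamma>0 \<le> 1" and "0 \<le> \<delta>0"
    and "\<delta>0 \<le> \<Gamma>0 ^ (DIM('a) + 1)"
    and "\<Gamma>0 \<le> 2 * \<mu>\<^sup>2 / 75"
    and "forbidden_config P' ((\<mu> - 2 * \<rho>0) / (1 + \<rho>0)) ((1 + \<rho>0) * \<epsilon>) \<Gamma>0 \<delta>0 \<tau>"
  shows "hoop_property (2 * (16 / \<mu>) ^ 3 * \<Gamma>0) \<tau> \<and>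
         (\<forall>p\<in>\<tau>. circumradius (\<tau> - {p}) < 2 * \<epsilon>)"
proof -
  have net: "finite P" "0 < \<epsilon>" "0 < \<mu>" "\<mu> \<le> 1" "separated (\<mu> * \<epsilon>) P"
    using assms(1) unfolding is_net_def by auto
  have pert: "bij_betw \<zeta> P P'" "\<And>a. a \<in> P \<Longrightarrow> norm (\<zeta> a - a) \<le> \<rho>0 * \<epsilon>"
    using assms(4) unfolding is_perturbation_def by auto
  obtain k p C R where tP: "\<tau> \<subseteq> P'" and kD: "k \<le> DIM('a)" and ck: "card \<tau> = k + 2"
    and fl: "flake \<Gamma>0 \<tau>" and p: "p \<in> \<tau>" and cbp: "circ_ball (\<tau> - {p}) C R"
    and RE: "R < (1 + \<rho>0) * \<epsilon>"
    and pC: "\<bar>norm (p - C) - R\<bar> \<le> \<delta>0 * ((\<mu> - 2 * \<rho>0) / (1 + \<rho>0)) * ((1 + \<rho>0) * \<epsilon>)"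
    using assms(10) unfolding forbidden_config_def by blast
  define M where "M = (\<mu> - 2 * \<rho>0) * \<epsilon>"
  define \<eta> where "\<eta> = \<delta>0 * M"
  have etaeq: "\<delta>0 * ((\<mu> - 2 * \<rho>0) / (1 + \<rho>0)) * ((1 + \<rho>0) * \<epsilon>) = \<eta>"
    unfolding \<eta>_def M_def using assms(2) by (simp add: field_simps)
  have fin: "finite \<tau>" using fl unfolding flake_def is_simplex_def by auto
  have sep: "M \<le> dist x y" if "x \<in> \<tau>" "y \<in> \<tau>" "x \<noteq> y" for x y
  proof -
    have "x \<in> P'" "y \<in> P'" using that tP by auto
    then obtain a b where ab: "a \<in> P" "b \<in> P" "\<zeta> a = x" "\<zeta> b = y"
      using pert(1) unfolding bij_betw_def by auto
    then have "a \<noteq> b" using that by auto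
    then have 1: "\<mu> * \<epsilon> \<le> dist a b" using net(5) ab unfolding separated_def by auto
    have 2: "dist a b \<le> dist a x + dist x y + dist y b"
      using dist_triangle[of a b x] dist_triangle[of x b y] by linarith
    have 3: "dist a x \<le> \<rho>0 * \<epsilon>" using pert(2)[OF ab(1)] ab(3) by (simp add: dist_norm norm_minus_commute)
    have 4: "dist y b \<le> \<rho>0 * \<epsilon>" using pert(2)[OF ab(2)] ab(4) by (simp add: dist_norm)
    show ?thesis using 1 2 3 4 unfolding M_def by (simp add: algebra_simps)
  qed
  have k1: "1 \<le> k"
  proof (rule ccontr)
    assume "\<not> 1 \<le> k"
    then have "card \<tau> = 2" using ck by simp
    then show False using flake_card2[OF fl _ assms(6)] by simp
  qed
  have e: "0 < \<epsilon>" and mu: "0 < \<mu>" "\<mu> \<le> 1" using net by auto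
  have Gm: "0 < \<Gamma>0" "\<Gamma>0 \<le> 1" "\<Gamma>0 \<le> 2 * \<mu>^2 / 75" using assms(5,6,9) by auto
  have G275: "\<Gamma>0 \<le> 2 / 75"
  proof -
    have "\<mu>^2 \<le> 1" using mu by (simp add: power_le_one)
    then show ?thesis using Gm by linarith
  qed
  have Mlow: "\<mu> * \<epsilon> / 2 \<le> M"
  proof -
    have "\<mu> / 2 \<le> \<mu> - 2 * \<rho>0" using assms(3) by linarith
    then have "\<mu> / 2 * \<epsilon> \<le> (\<mu> - 2 * \<rho>0) * \<epsilon>" using e by (intro mult_right_mono) auto
    then show ?thesis unfolding M_def by simp
  qed
  have Mpos: "0 < M" using Mlow mult_pos_pos[OF mu(1) e] by linarith
  have Rle: "R \<le> 5 * \<epsilon> / 4"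
  proof -
    have "(1 + \<rho>0) * \<epsilon> \<le> (5/4) * \<epsilon>" using assms(3) mu e by (intro mult_right_mono) auto
    then show ?thesis using RE by linarith
  qed
  have Rpos: "0 < R" using cbp unfolding circ_ball_def by simp
  have onS: "dist C v = R" if "v \<in> \<tau> - {p}" for v using circ_ball_dist(1)[OF cbp that] .
  have dCp: "\<bar>dist C p - R\<bar> \<le> \<eta>" using pC etaeq by (simp add: dist_norm norm_minus_commute)
  have dk: "\<delta>0 \<le> \<Gamma>0 ^ (k + 1)"
  proof -
    have "\<Gamma>0 ^ (DIM('a) + 1) \<le> \<Gamma>0 ^ (k + 1)" using kD Gm by (intro power_decreasing) auto
    then show ?thesis using assms(8) by linarith
  qed
  have etaG: "\<eta> \<le> \<Gamma>0 ^ (k + 1) * M" unfolding \<eta>_def using dk Mpos by (simp add: mult_right_mono)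
  have etaG1: "\<eta> \<le> \<Gamma>0 * M"
  proof -
    have "\<Gamma>0 ^ (k + 1) \<le> \<Gamma>0 ^ 1" using Gm by (intro power_decreasing) auto
    then have "\<Gamma>0 ^ (k + 1) * M \<le> \<Gamma>0 * M" using Mpos by (simp add: mult_right_mono)
    then show ?thesis using etaG by linarith
  qed
  have eta0: "0 \<le> \<eta>" unfolding \<eta>_def using assms(7) Mpos by simp
  have distC: "dist C v \<le> R + \<eta>" if "v \<in> \<tau>" for v
    using onS[of v] dCp that eta0 by (cases "v = p") auto
  define Lb where "Lb = 2 * R + 2 * \<eta>"
  have diam: "dist a b \<le> Lb" if "a \<in> \<tau>" "b \<in> \<tau>" for a b
    using dist_triangle[of a b C] distC[OF that(1)] distC[OF that(2)] unfolding Lb_def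
    by (simp add: dist_commute)
  have cardq: "card (\<tau> - {q}) = k + 1" if "q \<in> \<tau>" for q using ck that fin by simp
  have two: "\<exists>a\<in>\<tau> - {q}. \<exists>b\<in>\<tau> - {q}. a \<noteq> b" if "q \<in> \<tau>" for q
    using two_elems[of "\<tau> - {q}"] cardq[OF that] fin k1 by (metis finite_Diff add_le_cancel_right one_add_one)
  have MR: "M \<le> 2 * R"
  proof -
    obtain a b where ab: "a \<in> \<tau> - {p}" "b \<in> \<tau> - {p}" "a \<noteq> b" using two[OF p] by blast
    have "M \<le> dist a b" using sep ab by auto
    also have "\<dots> \<le> dist a C + dist C b" by (rule dist_triangle)
    finally show ?thesis using onS[OF ab(1)] onS[OF ab(2)] by (simp add: dist_commute)
  qed
  have GLb: "2 * \<Gamma>0 * Lb < M"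
    using numeric2[OF e mu Gm(1) Gm(3) Mlow MR Rle eta0 etaG1 Lb_def] .
  define X where "X = \<Gamma>0 ^ k * real k"
  define G where "G = X * M"
  have Xpos: "0 < X" unfolding X_def using Gm k1 by simp
  have Gpos: "0 < G" unfolding G_def using Xpos Mpos by simp
  have goodq: "good \<Gamma>0 (\<tau> - {q})" if "q \<in> \<tau>" for q
  proof -
    have "\<tau> - {q} \<subset> \<tau>" using that by auto
    moreover have "\<tau> - {q} \<noteq> {}" using two[OF that] by auto
    ultimately show ?thesis using fl unfolding flake_def by blast
  qed
  have Lq: "M \<le> longest_edge (\<tau> - {q})" if qq: "q \<in> \<tau>" for q
  proof -
    obtain a b where ab: "a \<in> \<tau> - {q}" "b \<in> \<tau> - {q}" "a \<noteq> b" using two[OF qq] by blast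
    have "M \<le> dist a b" using sep ab by auto
    also have "\<dots> \<le> longest_edge (\<tau> - {q})" using longest_edge_ge[of "\<tau> - {q}" a b] fin ab by auto
    finally show ?thesis .
  qed
  have galt: "G \<le> altitude v (\<tau> - {q})" if "q \<in> \<tau>" "v \<in> \<tau> - {q}" for q v
  proof -
    have c2: "2 \<le> card (\<tau> - {q})" using cardq[OF that(1)] k1 by simp
    have Lp: "0 < longest_edge (\<tau> - {q})" using Lq[OF that(1)] Mpos by linarith
    have "\<Gamma>0^(card (\<tau> - {q}) - 1) * (real (card (\<tau> - {q}) - 1) * longest_edge (\<tau> - {q})) \<le> altitude v (\<tau> - {q})"
      using good_alt[OF goodq[OF that(1)] _ c2 that(2) Lp] fin by simp
    then have 1: "\<Gamma>0^k * (real k * longest_edge (\<tau> - {q})) \<le> altitude v (\<tau> - {q})"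
      using cardq[OF that(1)] by simp
    have "G = \<Gamma>0^k * (real k * M)" unfolding G_def X_def by simp
    also have "\<dots> \<le> \<Gamma>0^k * (real k * longest_edge (\<tau> - {q}))"
      using Lq[OF that(1)] Gm by (intro mult_left_mono) auto
    finally show ?thesis using 1 by linarith
  qed
  have GleLb: "G \<le> Lb"
  proof -
    obtain a b where ab: "a \<in> \<tau> - {p}" "b \<in> \<tau> - {p}" "a \<noteq> b" using two[OF p] by blast
    have "G \<le> altitude a (\<tau> - {p})" using galt[OF p ab(1)] .
    also have "\<dots> \<le> dist a b" using altitude_le[of b "\<tau> - {p}" a] ab by auto
    also have "\<dots> \<le> Lb" using diam ab by auto
    finally show ?thesis .
  qed
  have Lt: "M \<le> longest_edge \<tau>" "longest_edge \<tau> \<le> Lb"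
  proof -
    obtain a b where ab: "a \<in> \<tau> - {p}" "b \<in> \<tau> - {p}" "a \<noteq> b" using two[OF p] by blast
    have "M \<le> dist a b" using sep ab by auto
    also have "\<dots> \<le> longest_edge \<tau>" using longest_edge_ge[OF fin, of a b] ab by auto
    finally show "M \<le> longest_edge \<tau>" .
    obtain x y where "x \<in> \<tau>" "y \<in> \<tau>" "longest_edge \<tau> = dist x y"
      using longest_edge_attained[OF fin] p by blast
    then show "longest_edge \<tau> \<le> Lb" using diam by auto
  qed
  obtain q0 where q0: "q0 \<in> \<tau>"
    and q0a: "altitude q0 \<tau> < \<Gamma>0^(card \<tau> - 1) * (real (card \<tau> - 1) * longest_edge \<tau>)"
    using bad_alt[OF fl] ck Lt(1) Mpos by (metis add_2_eq_Suc' le_add2 add.commute less_le_trans)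
  define D0 where "D0 = altitude q0 \<tau>"
  have D0nn: "0 \<le> D0" unfolding D0_def altitude_def by (rule infdist_nonneg)
  have D0b: "D0 \<le> 2 * \<Gamma>0 * X * Lb"
  proof -
    have "D0 < \<Gamma>0^(k+1) * (real (k+1) * longest_edge \<tau>)" using q0a ck unfolding D0_def by simp
    also have "\<dots> \<le> \<Gamma>0^(k+1) * (real (2*k) * Lb)"
      using Lt k1 Gm Mpos by (intro mult_left_mono mult_mono) auto
    also have "\<dots> = 2 * \<Gamma>0 * X * Lb" unfolding X_def by (simp add: algebra_simps)
    finally show ?thesis by linarith
  qed
  have den: "0 < M - 2 * \<Gamma>0 * Lb" using GLb by linarith
  define Dm where "Dm = 2 * \<Gamma>0 * Lb^2 / (M - 2 * \<Gamma>0 * Lb)"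
  have Lbnn: "0 \<le> Lb" using Lb_def Rpos eta0 by simp
  have Dbound: "altitude q \<tau> \<le> Dm" if q: "q \<in> \<tau>" for q
  proof (cases "q = q0")
    case True
    have "X * M \<le> Lb" using GleLb G_def by simp
    then have "2 * \<Gamma>0 * Lb * (X * M) \<le> 2 * \<Gamma>0 * Lb * Lb" using Gm Lbnn by (intro mult_left_mono) auto
    then have "2 * \<Gamma>0 * X * Lb \<le> 2 * \<Gamma>0 * Lb^2 / M" using Mpos by (simp add: field_simps power2_eq_square)
    also have "\<dots> \<le> Dm" unfolding Dm_def using den Gm Lbnn Mpos by (intro divide_left_mono) (auto intro: mult_pos_pos)
    finally show ?thesis using D0b True D0_def by simp
  next
    case False
    obtain v1 where v1: "v1 \<in> \<tau> - {q} - {q0}"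
    proof -
      have "card (\<tau> - {q} - {q0}) = k" using cardq[OF q] q0 False fin by simp
      then have "\<tau> - {q} - {q0} \<noteq> {}" using k1 by (intro notI) simp
      then show ?thesis using that by blast
    qed
    have D0G: "D0 < G" unfolding G_def using D0b GLb Xpos
      by (smt (verit) mult_strict_left_mono mult.assoc mult.commute)
    have gq: "G \<le> infdist q0 (affine hull (\<tau> - {q} - {q0}))"
      using galt[OF q, of q0] q0 False unfolding altitude_def by simp
    have "altitude q \<tau> \<le> D0 * Lb / (G - D0)"
      unfolding altitude_def
      using alt_transfer[OF fin q0 q False, of v1 D0 G Lb] v1 D0G gq diam unfolding D0_def altitude_def
      by auto
    also have "\<dots> \<le> (2 * \<Gamma>0 * X * Lb) * Lb / (X * M - 2 * \<Gamma>0 * X * Lb)"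
    proof (rule frac_le)
      show "0 \<le> 2 * \<Gamma>0 * X * Lb * Lb" using Gm Xpos Lbnn by simp
      show "D0 * Lb \<le> 2 * \<Gamma>0 * X * Lb * Lb" using D0b Lbnn by (intro mult_right_mono) auto
      show "0 < X * M - 2 * \<Gamma>0 * X * Lb"
        using mult_strict_left_mono[OF GLb Xpos] by (simp add: algebra_simps)
      show "X * M - 2 * \<Gamma>0 * X * Lb \<le> G - D0" using D0b G_def by simp
    qed
    also have "\<dots> = Dm" unfolding Dm_def using Xpos den
      by (simp add: field_simps power2_eq_square)
    finally show ?thesis .
  qed
  have Gk: "\<Gamma>0^k * M \<le> G" unfolding G_def X_def using k1 Gm Mpos
    by (simp add: mult.commute mult_left_mono mult_right_mono)
  have Gk0: "0 < \<Gamma>0^k * M" using Gm Mpos by simp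
  have etaGk: "\<eta> \<le> \<Gamma>0 * (\<Gamma>0^k * M)" using etaG by (simp add: algebra_simps)
  have gpC: "\<bar>(dist C p)^2 - R^2\<bar> \<le> \<eta> * (2 * R + \<eta>)"
  proof -
    have "(dist C p)^2 - R^2 = (dist C p - R) * (dist C p + R)" by (simp add: power2_eq_square algebra_simps)
    then have "\<bar>(dist C p)^2 - R^2\<bar> = \<bar>dist C p - R\<bar> * (dist C p + R)" using Rpos by (simp add: abs_mult)
    also have "\<dots> \<le> \<eta> * (2 * R + \<eta>)" using dCp Rpos eta0 by (intro mult_mono) auto
    finally show ?thesis .
  qed
  have perq: "circ_finite (\<tau> - {q}) \<and>
      infdist q (circumsphere (\<tau> - {q})) \<le> 2 * (16 / \<mu>) ^ 3 * \<Gamma>0 * circumradius (\<tau> - {q}) \<and>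
      circumradius (\<tau> - {q}) < 2 * \<epsilon>" if q: "q \<in> \<tau>" for q
  proof -
    define \<sigma> where "\<sigma> = \<tau> - {q}"
    have fs: "finite \<sigma>" using fin \<sigma>_def by simp
    obtain v0 v1 where vv: "v0 \<in> \<sigma>" "v1 \<in> \<sigma>" "v0 \<noteq> v1" using two[OF q] \<sigma>_def by blast
    have rb: "\<exists>c' r'. circ_ball \<sigma> c' r' \<and> r' \<le> R + \<Gamma>0 * (2 * R + \<eta>) / 2"
    proof (cases "q = p")
      case True
      have "R \<le> R + \<Gamma>0 * (2 * R + \<eta>) / 2" using Gm Rpos eta0 by simp
      then show ?thesis using cbp True \<sigma>_def by blast
    next
      case False
      have ps: "p \<in> \<sigma>" using p False \<sigma>_def by simp
      obtain w0 where w0: "w0 \<in> \<sigma>" "w0 \<noteq> p" using vv by metis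
      have W: "G \<le> infdist p (affine hull (\<sigma> - {p}))"
        using galt[OF q, of p] ps unfolding \<sigma>_def altitude_def by simp
      have Wp: "0 < infdist p (affine hull (\<sigma> - {p}))" using W Gpos by linarith
      obtain c' r' where cr: "circ_ball \<sigma> c' r'"
        "r' \<le> R + \<bar>(dist C p)^2 - R^2\<bar> / (2 * infdist p (affine hull (\<sigma> - {p})))"
        using circ_construct[OF fs ps w0 _ Wp, of C R] onS \<sigma>_def by auto
      have "\<bar>(dist C p)^2 - R^2\<bar> / (2 * infdist p (affine hull (\<sigma> - {p})))
          \<le> (\<Gamma>0 * (\<Gamma>0^k * M) * (2 * R + \<eta>)) / (2 * (\<Gamma>0^k * M))"
      proof (rule frac_le)
        show "0 \<le> \<Gamma>0 * (\<Gamma>0 ^ k * M) * (2 * R + \<eta>)" using Gm Mpos Rpos eta0 by simp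
        show "\<bar>(dist C p)\<^sup>2 - R\<^sup>2\<bar> \<le> \<Gamma>0 * (\<Gamma>0 ^ k * M) * (2 * R + \<eta>)"
        proof -
          have "\<eta> * (2 * R + \<eta>) \<le> \<Gamma>0 * (\<Gamma>0 ^ k * M) * (2 * R + \<eta>)"
            using etaGk Rpos eta0 by (intro mult_right_mono) auto
          then show ?thesis using gpC by linarith
        qed
        show "0 < 2 * (\<Gamma>0 ^ k * M)" using Gk0 by simp
        show "2 * (\<Gamma>0 ^ k * M) \<le> 2 * infdist p (affine hull (\<sigma> - {p}))" using Gk W by simp
      qed
      also have "\<dots> = \<Gamma>0 * (2 * R + \<eta>) / 2" by (rule cancel_aux) (use Gk0 in linarith)
      finally show ?thesis using cr by (intro exI[of _ c'] exI[of _ r']) auto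
    qed
    then have cf: "circ_finite \<sigma>" unfolding circ_finite_def by blast
    define c where "c = circumcentre \<sigma>"
    define r where "r = circumradius \<sigma>"
    have sm: "smallest_circ_ball \<sigma> c r" using smallest_exists[OF cf vv] c_def r_def by simp
    have cb: "circ_ball \<sigma> c r" using sm unfolding smallest_circ_ball_def by blast
    have rle: "r \<le> R + \<Gamma>0 * (2 * R + \<eta>) / 2" using rb sm unfolding smallest_circ_ball_def by force
    have r2: "r < 2 * \<epsilon>"
      using rle numeric3[OF e Gm(1) G275 _ Rle eta0 etaG1 MR] Rpos Mpos by linarith
    have cH: "c \<in> affine hull \<sigma>" using smallest_centre_in_hull[OF sm vv] .
    have rv: "dist c v = r" if "v \<in> \<sigma>" for v using circ_ball_dist(1)[OF cb that] .
    have rM: "M / 2 \<le> r"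
    proof -
      have "M \<le> dist v0 v1" using sep vv \<sigma>_def by auto
      also have "\<dots> \<le> dist v0 c + dist c v1" by (rule dist_triangle)
      finally show ?thesis using rv vv by (simp add: dist_commute)
    qed
    have rpos: "0 < r" using rM Mpos by linarith
    define qs where "qs = closest_point (affine hull \<sigma>) q"
    have sne: "\<sigma> \<noteq> {}" using vv by auto
    have qsH: "qs \<in> affine hull \<sigma>" using hull_proj(1)[OF sne] qs_def by simp
    define D where "D = dist q qs"
    have Deq: "D = altitude q \<tau>" using hull_proj(2)[OF sne, where x=q] unfolding D_def qs_def altitude_def \<sigma>_def by simp
    have Dnn: "0 \<le> D" unfolding D_def by simp
    have DDm: "D \<le> Dm" using Dbound[OF q] Deq by simp
    obtain u where u1: "sum u \<sigma> = 1" and uq: "(\<Sum>v\<in>\<sigma>. u v *\<^sub>R v) = qs"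
      using aff_rep[OF fs qsH] by blast
    have fid: "(dist qs c)^2 - r^2 - ((dist qs C)^2 - R^2)
        = (\<Sum>v\<in>\<sigma>. u v * ((dist v c)^2 - r^2 - ((dist v C)^2 - R^2)))"
      using f_identity[OF fs u1, of c r C R] uq by simp
    define F where "F = \<bar>(dist qs c)^2 - r^2\<bar>"
    have Fb: "F \<le> D * (2 * R + 2 * \<eta> + D) + \<Gamma>0 * (D + 2 * Lb) * (2 * R + \<eta>)"
    proof (cases "q = p")
      case True
      have z: "(\<Sum>v\<in>\<sigma>. u v * ((dist v c)^2 - r^2 - ((dist v C)^2 - R^2))) = 0"
      proof (rule sum.neutral, rule ballI)
        fix v assume v: "v \<in> \<sigma>"
        have "dist v c = r" using rv[OF v] by (simp add: dist_commute)
        moreover have "dist v C = R" using onS[of v] v True \<sigma>_def by (simp add: dist_commute)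
        ultimately show "u v * ((dist v c)^2 - r^2 - ((dist v C)^2 - R^2)) = 0" by simp
      qed
      have e1: "(dist qs c)^2 - r^2 = (dist qs C)^2 - R^2" using fid z by simp
      have a1: "\<bar>(dist qs C)^2 - (dist p C)^2\<bar> \<le> D * (2 * dist p C + D)"
      proof -
        have "dist qs p = D" unfolding D_def using True by (simp add: dist_commute)
        then show ?thesis using sq_dist_diff[where x=qs and y=p and C=C] by simp
      qed
      have a2: "\<bar>(dist p C)^2 - R^2\<bar> \<le> \<eta> * (2 * R + \<eta>)" using gpC by (simp add: dist_commute)
      have a3: "D * (2 * dist p C + D) \<le> D * (2 * R + 2 * \<eta> + D)"
        using distC[OF p] Dnn by (intro mult_left_mono) (auto simp: dist_commute)
      have a4: "\<eta> * (2 * R + \<eta>) \<le> \<Gamma>0 * (D + 2 * Lb) * (2 * R + \<eta>)"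
      proof -
        have "\<Gamma>0 * M \<le> \<Gamma>0 * (D + 2 * Lb)" using MR Dnn Lb_def eta0 Gm Rpos by (intro mult_left_mono) auto
        then have "\<eta> \<le> \<Gamma>0 * (D + 2 * Lb)" using etaG1 by linarith
        then show ?thesis using Rpos eta0 by (intro mult_right_mono) auto
      qed
      show ?thesis unfolding F_def e1 using a1 a2 a3 a4 by linarith
    next
      case False
      have ps: "p \<in> \<sigma>" using p False \<sigma>_def by simp
      have z: "(\<Sum>v\<in>\<sigma>. u v * ((dist v c)^2 - r^2 - ((dist v C)^2 - R^2)))
          = u p * ((dist p c)^2 - r^2 - ((dist p C)^2 - R^2))"
      proof (rule sum_single[OF fs ps])
        fix v assume v: "v \<in> \<sigma>" "v \<noteq> p"
        have "dist v c = r" using rv[OF v(1)] by (simp add: dist_commute)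
        moreover have "dist v C = R" using onS[of v] v \<sigma>_def by (simp add: dist_commute)
        ultimately show "u v * ((dist v c)^2 - r^2 - ((dist v C)^2 - R^2)) = 0" by simp
      qed
      have pc: "dist p c = r" using rv[OF ps] by (simp add: dist_commute)
      have e1: "(dist qs c)^2 - r^2 = ((dist qs C)^2 - R^2) - u p * ((dist p C)^2 - R^2)"
      proof -
        have "u p * (R^2 - (dist p C)^2) = - (u p * ((dist p C)^2 - R^2))" by (simp add: algebra_simps)
        then show ?thesis using fid z pc by simp
      qed
      have qC: "dist q C = R" using onS[of q] q False by (simp add: dist_commute)
      have a1: "\<bar>(dist qs C)^2 - R^2\<bar> \<le> D * (2 * R + D)"
      proof -
        have "dist qs q = D" unfolding D_def by (simp add: dist_commute)
        then show ?thesis using sq_dist_diff[where x=qs and y=q and C=C] qC by simp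
      qed
      have spne: "\<sigma> - {p} \<noteq> {}" using vv by auto
      obtain a where aA: "a \<in> affine hull (\<sigma> - {p})"
        and da: "dist p a = infdist p (affine hull (\<sigma> - {p}))"
        and ua: "\<bar>u p\<bar> * infdist p (affine hull (\<sigma> - {p})) \<le> dist (\<Sum>v\<in>\<sigma>. u v *\<^sub>R v) a"
        using up_bound[OF fs ps spne u1] by blast
      define W where "W = infdist p (affine hull (\<sigma> - {p}))"
      have WG: "G \<le> W" using galt[OF q, of p] ps unfolding \<sigma>_def altitude_def W_def by simp
      obtain w0 where w0: "w0 \<in> \<sigma>" "w0 \<noteq> p" using vv by metis
      have WL: "W \<le> Lb"
      proof -
        have "W \<le> dist p w0" unfolding W_def using w0 by (intro infdist_le hull_inc) auto
        also have "\<dots> \<le> Lb" using diam p w0 \<sigma>_def by auto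
        finally show ?thesis .
      qed
      have uW: "\<bar>u p\<bar> * W \<le> D + 2 * Lb"
      proof -
        have "dist qs a \<le> dist qs q + dist q p + dist p a"
          using dist_triangle[of qs a q] dist_triangle[of q a p] by linarith
        moreover have "dist qs q = D" unfolding D_def by (simp add: dist_commute)
        moreover have "dist q p \<le> Lb" using diam q p by auto
        ultimately have "dist qs a \<le> D + Lb + W" using da W_def by simp
        then show ?thesis using ua uq W_def WL by simp
      qed
      have a2: "\<bar>u p * ((dist p C)^2 - R^2)\<bar> \<le> \<Gamma>0 * (D + 2 * Lb) * (2 * R + \<eta>)"
      proof -
        have "\<bar>u p * ((dist p C)^2 - R^2)\<bar> = \<bar>u p\<bar> * \<bar>(dist p C)^2 - R^2\<bar>" by (simp add: abs_mult)
        also have "\<dots> \<le> \<bar>u p\<bar> * (\<eta> * (2 * R + \<eta>))"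
          using gpC by (intro mult_left_mono) (auto simp: dist_commute)
        also have "\<dots> \<le> \<bar>u p\<bar> * ((\<Gamma>0 * W) * (2 * R + \<eta>))"
        proof -
          have "\<Gamma>0 * (\<Gamma>0^k * M) \<le> \<Gamma>0 * W" using Gk WG Gm by (intro mult_left_mono) auto
          then have "\<eta> \<le> \<Gamma>0 * W" using etaGk by linarith
          then show ?thesis using Rpos eta0 by (intro mult_left_mono mult_right_mono) auto
        qed
        also have "\<dots> = \<Gamma>0 * (\<bar>u p\<bar> * W) * (2 * R + \<eta>)" by (simp add: algebra_simps)
        also have "\<dots> \<le> \<Gamma>0 * (D + 2 * Lb) * (2 * R + \<eta>)"
          using uW Gm Rpos eta0 by (intro mult_right_mono mult_left_mono) auto
        finally show ?thesis .
      qed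
      have a3: "D * (2 * R + D) \<le> D * (2 * R + 2 * \<eta> + D)" using Dnn eta0 by (intro mult_left_mono) auto
      have "F \<le> \<bar>(dist qs C)^2 - R^2\<bar> + \<bar>u p * ((dist p C)^2 - R^2)\<bar>"
        unfolding F_def e1 by (rule abs_triangle_ineq4)
      then show ?thesis using a1 a2 a3 by linarith
    qed
    have "infdist q (circumsphere \<sigma>) \<le> infdist qs (circumsphere \<sigma>) + dist q qs"
      by (rule infdist_triangle)
    also have "infdist qs (circumsphere \<sigma>) \<le> F / r"
      unfolding circumsphere_def c_def[symmetric] r_def[symmetric] F_def
      using sphere_dist[OF rpos affine_affine_hull cH qsH _ rv[OF vv(1)]] vv(1) hull_inc
      by (metis dist_commute)
    finally have "infdist q (circumsphere \<sigma>) \<le> D + F / r" unfolding D_def by linarith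
    also have "\<dots> \<le> 2 * (16 / \<mu>) ^ 3 * \<Gamma>0 * r"
      using numeric_final[OF e mu Gm(1) Gm(3) Mlow MR Rle eta0 etaG1 Lb_def Dnn DDm[unfolded Dm_def] Fb rM] .
    finally show ?thesis using cf r2 unfolding \<sigma>_def r_def by simp
  qed
  show ?thesis unfolding hoop_property_def using perq by blast
qed

end
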